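(* Let $d>0$ and $y_1>0$, and let $S$ be a finite set of points in $\{(x,y):x\ge d\}$ with at least one point on the line $\mathcal{L}'=\{x=d\}$. Define $x^*<0$ as follows: if $S$ has no point $(d,y)$ with $y>y_1$, let $x^*$ be an arbitrary negative number; otherwise let $y_3=\max\{y:(d,y)\in S,\ y>y_1\}$ and $x^*=-\frac{1}{2}\,d\,\frac{y_1}{y_3-y_1}$. Then for every $x\in[x^*,0)$, every $y_1'\ge y_1$ and every $q\in S\cap\mathcal{L}'$: the closed segment from $q$ to $(x,0)$ contains no point of $(S\setminus\{q\})\cup\{(0,y_1')\}$, and the closed segment from $q$ to $(0,y_1')$ contains no point of $(S\setminus\{q\})\cup\{(x,0)\}$. (Interpretation: a robot starting at the origin and moving left horizontally to $(x^*,0)$, while another robot at $(0,y_1)$ stays put or moves upward along the $Y$-axis, never obstructs or is obstructed from the robots on the leftmost line $\mathcal{L}'$ of the remaining robots $S$.)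
   Context: All coordinates are in a fixed Cartesian coordinate system of the plane; "segment" means closed line segment. *)

theory Defs
  imports "HOL-Analysis.Analysis"
begin

definition vline :: "real \<Rightarrow> (real \<times> real) set" where
  "vline d = {p. fst p = d}"

definition admissible_xstar :: "real \<Rightarrow> real \<Rightarrow> (real \<times> real) set \<Rightarrow> real \<Rightarrow> bool" where
  "admissible_xstar d y1 S xs \<longleftrightarrow>
     xs < 0 \<and>
     (if {y. (d, y) \<in> S \<and> y > y1} = {} then True
      else xs = - (1/2) * d * (y1 / (Max {y. (d, y) \<in> S \<and> y > y1} - y1)))"

end

theory Submission
  imports Defs
begin

theorem mainTheorem6:
  fixes d y1 xs :: real and S :: "(real \<times> real) set"
  assumes "d > 0" and "y1 > 0"
    and "finite S" and "S \<subseteq> {p. fst p \<ge> d}"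
    and "S \<inter> vline d \<noteq> {}"
    and "admissible_xstar d y1 S xs"
  shows "\<forall>x y1' q. xs \<le> x \<and> x < 0 \<and> y1 \<le> y1' \<and> q \<in> S \<inter> vline d \<longrightarrow>
           closed_segment q (x, 0) \<inter> ((S - {q}) \<union> {(0, y1')}) = {} \<and>
           closed_segment q (0, y1') \<inter> ((S - {q}) \<union> {(x, 0)}) = {}"
proof (intro allI impI conjI)
  fix x y1' q
  assume H: "xs \<le> x \<and> x < 0 \<and> y1 \<le> y1' \<and> q \<in> S \<inter> vline d"
  then have hx: "xs \<le> x" "x < 0" and hy: "y1 \<le> y1'" and qS: "q \<in> S" and qv: "fst q = d"
    by (auto simp: vline_def)
  obtain yq where q: "q = (d, yq)" using qv by (cases q) auto
  have Sd: "\<And>p. p \<in> S \<Longrightarrow> fst p \<ge> d" using assms(4) by auto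
  show "closed_segment q (x, 0) \<inter> ((S - {q}) \<union> {(0, y1')}) = {}"
  proof (rule ccontr)
    assume "closed_segment q (x, 0) \<inter> ((S - {q}) \<union> {(0, y1')}) \<noteq> {}"
    then obtain p u where pu: "0 \<le> u" "u \<le> 1" "p = (1 - u) *\<^sub>R q + u *\<^sub>R (x, 0)"
      and pin: "p \<in> (S - {q}) \<union> {(0, y1')}"
      unfolding closed_segment_def by blast
    have p: "p = ((1-u)*d + u*x, (1-u)*yq)" using pu(3) q by simp
    show False
    proof (cases "p = (0, y1')")
      case False
      then have "p \<in> S" "p \<noteq> q" using pin by auto
      then have "(1-u)*d + u*x \<ge> d" using Sd p by fastforce
      then have "u*(x-d) \<ge> 0" by (simp add: algebra_simps)
      moreover have "x - d < 0" using hx assms(1) by simp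
      ultimately have "u = 0" using pu(1) by (simp add: mult_nonneg_nonpos2 zero_le_mult_iff)
      then show False using p q \<open>p \<noteq> q\<close> by simp
    next
      case True
      then have e1: "(1-u)*d + u*x = 0" and e2: "(1-u)*yq = y1'" using p by auto
      have u1: "u < 1" using e1 assms(1) hx(2) pu(2) by (cases "u = 1") auto
      have u0: "u > 0" using e1 assms(1) pu(1) by (cases "u = 0") auto
      show False
      proof (cases "yq > y1")
        case False
        have "(1-u)*yq < y1"
        proof (cases "yq \<le> 0")
          case True then show ?thesis using u1 assms(2)
            by (smt (verit) mult_nonneg_nonpos)
        next
          case False
          have "(1-u)*yq < 1*yq" using False u0 by (intro mult_strict_right_mono) auto
          then show ?thesis using \<open>\<not> yq > y1\<close> by simp
        qed
        then show False using e2 hy by simp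
      next
        case True
        define A where "A = {y. (d, y) \<in> S \<and> y > y1}"
        have "yq \<in> A" using True qS q A_def by simp
        have fA: "finite A"
        proof -
          have "A \<subseteq> snd ` S" unfolding A_def by (auto simp: image_iff) (metis snd_conv)
          then show ?thesis using assms(3) finite_subset by blast
        qed
        define M where "M = Max A"
        have yqM: "yq \<le> M" using fA \<open>yq \<in> A\<close> M_def by simp
        have "M \<in> A" using fA \<open>yq \<in> A\<close> M_def by (metis Max_in empty_iff)
        then have My: "M > y1" using A_def by simp
        have xsd: "xs = - (1/2) * d * (y1 / (M - y1))"
        proof -
          have "A \<noteq> {}" using \<open>yq \<in> A\<close> by auto
          then show ?thesis using assms(6) unfolding admissible_xstar_def A_def M_def by presburger
        qed
        have "-x \<le> d * y1 / (2*(M - y1))" using hx(1) xsd by simp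
        then have "-x * (2*(M-y1)) \<le> d*y1" using My by (simp add: pos_le_divide_eq)
        then have "u*(-x) * (2*(M-y1)) \<le> u*(d*y1)" using u0
          by (metis mult.assoc mult_left_mono less_imp_le)
        moreover have "u*(-x) = (1-u)*d" using e1 by simp
        ultimately have "(1-u)*d*(2*(M-y1)) \<le> u*d*y1" by (metis mult.commute mult.left_commute)
        then have "d*((1-u)*(2*(M-y1))) \<le> d*(u*y1)" by (simp add: algebra_simps)
        then have k: "(1-u)*(2*(M-y1)) \<le> u*y1" using assms(1) by simp
        have "(1-u)*yq \<le> (1-u)*M" using yqM u1 by simp
        also have "(1-u)*M < y1"
        proof -
          have "(1-u)*(M-y1) > 0" using u1 My by simp
          then show ?thesis using k by (simp add: algebra_simps)
        qed
        finally show False using e2 hy by simp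
      qed
    qed
  qed
  show "closed_segment q (0, y1') \<inter> ((S - {q}) \<union> {(x, 0)}) = {}"
  proof (rule ccontr)
    assume "closed_segment q (0, y1') \<inter> ((S - {q}) \<union> {(x, 0)}) \<noteq> {}"
    then obtain p u where pu: "0 \<le> u" "u \<le> 1" "p = (1 - u) *\<^sub>R q + u *\<^sub>R (0, y1')"
      and pin: "p \<in> (S - {q}) \<union> {(x, 0)}"
      unfolding closed_segment_def by blast
    have p: "p = ((1-u)*d, (1-u)*yq + u*y1')" using pu(3) q by simp
    show False
    proof (cases "p = (x, 0)")
      case True
      then have "(1-u)*d = x" using p by simp
      moreover have "(1-u)*d \<ge> 0" using pu(2) assms(1) by simp
      ultimately show False using hx by simp
    next
      case False
      then have "p \<in> S" "p \<noteq> q" using pin by auto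
      then have "(1-u)*d \<ge> d" using Sd p by fastforce
      then have "u*d \<le> 0" by (simp add: algebra_simps)
      then have "u = 0" using pu(1) assms(1) by (simp add: mult_le_0_iff)
      then show False using p q \<open>p \<noteq> q\<close> by simp
    qed
  qed
qed

end
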